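(* Let $\mathcal G$ be an undirected graph on nodes $\{1,\dots,n\}$ with adjacency matrix $A=(a_{ij})\in\{0,1\}^{n\times n}$, and consider the networked SIR process on $\mathcal G$ with infection rates $\beta_i>0$ and recovery rates $\delta_i>0$, $i=1,\dots,n$. Define the $n\times n$ diagonal matrices $J$, $B$, $D$ by $J_{ii}=S_i(0)$, $B_{ii}=\beta_i$, $D_{ii}=\delta_i$. Let $\bar\lambda>0$ be given. If there exists an entrywise positive vector $v\in\mathbb R^n$ such that $$v^\top JBA+\mathbf 1_n^\top D< v^\top D \quad\text{(entrywise)}\qquad\text{and}\qquad v^\top I(0)<\bar\lambda+\sigma_I(0),$$ then $\lambda<\bar\lambda$.
   Context: Networked SIR process: each node $i$ is at each time $t\ge0$ in exactly one of the states susceptible, infected, removed, encoded by $\{0,1\}$-valued variables $S_i(t),I_i(t),R_i(t)$ (exactly one equals $1$). It is a continuous-time Markov process with transition probabilities, for all $t\ge 0$, $h>0$: $\Pr(I_i(t+h)=1\mid S_i(t)=1)=\beta_i\sum_{j=1}^n a_{ij}I_j(t)\,h+o(h)$ and $\Pr(R_i(t+h)=1\mid I_i(t)=1)=\delta_i h+o(h)$; no other transitions occur (removed nodes stay removed). At time $0$ each node is (deterministically, known) either susceptible or infected. $I(t)=[I_1(t),\dots,I_n(t)]^\top$. $\sigma_I(t)$ and $\sigma_R(t)$ denote the numbers of infected and removed nodes at time $t$, and $\lambda=\lim_{t\to\infty}E[\sigma_R(t)]-\sigma_I(0)$ (the expected number of infections after time $0$). $\mathbf 1_n$ is the all-ones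 vector in $\mathbb R^n$; inequalities between vectors are entrywise. *)

theory Defs
  imports Complex_Main
begin

datatype comp = Sus | Inf | Rem

lemma UNIV_comp: "UNIV = {Sus, Inf, Rem}"
  using comp.exhaust by auto

instance comp :: finite
  by standard (simp add: UNIV_comp)

definition sir_rate ::
  "('n::finite \<Rightarrow> 'n \<Rightarrow> real) \<Rightarrow> ('n \<Rightarrow> real) \<Rightarrow> ('n \<Rightarrow> real)
   \<Rightarrow> ('n \<Rightarrow> comp) \<Rightarrow> ('n \<Rightarrow> comp) \<Rightarrow> real" where
  "sir_rate a \<beta> \<delta> x y =
     (\<Sum>i\<in>UNIV.
        (if x i = Sus \<and> y = x(i := Inf)
         then \<beta> i * (\<Sum>j\<in>UNIV. a i j * (if x j = Inf then 1 else 0)) else 0)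
      + (if x i = Inf \<and> y = x(i := Rem) then \<delta> i else 0))"

definition sir_gen ::
  "('n::finite \<Rightarrow> 'n \<Rightarrow> real) \<Rightarrow> ('n \<Rightarrow> real) \<Rightarrow> ('n \<Rightarrow> real)
   \<Rightarrow> ('n \<Rightarrow> comp) \<Rightarrow> ('n \<Rightarrow> comp) \<Rightarrow> real" where
  "sir_gen a \<beta> \<delta> x y =
     (if x = y then - (\<Sum>z\<in>UNIV - {x}. sir_rate a \<beta> \<delta> x z)
      else sir_rate a \<beta> \<delta> x y)"

fun mat_pow :: "('s::finite \<Rightarrow> 's \<Rightarrow> real) \<Rightarrow> nat \<Rightarrow> 's \<Rightarrow> 's \<Rightarrow> real" where
  "mat_pow Q 0 x y = (if x = y then 1 else 0)"
| "mat_pow Q (Suc k) x y = (\<Sum>z\<in>UNIV. mat_pow Q k x z * Q z y)"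

definition sir_trans ::
  "('n::finite \<Rightarrow> 'n \<Rightarrow> real) \<Rightarrow> ('n \<Rightarrow> real) \<Rightarrow> ('n \<Rightarrow> real)
   \<Rightarrow> real \<Rightarrow> ('n \<Rightarrow> comp) \<Rightarrow> ('n \<Rightarrow> comp) \<Rightarrow> real" where
  "sir_trans a \<beta> \<delta> t x y =
     (\<Sum>k. t ^ k / fact k * mat_pow (sir_gen a \<beta> \<delta>) k x y)"

definition count_comp :: "comp \<Rightarrow> ('n::finite \<Rightarrow> comp) \<Rightarrow> real" where
  "count_comp c x = real (card {i. x i = c})"

definition expected_removed ::
  "('n::finite \<Rightarrow> 'n \<Rightarrow> real) \<Rightarrow> ('n \<Rightarrow> real) \<Rightarrow> ('n \<Rightarrow> real)
   \<Rightarrow> ('n \<Rightarrow> comp) \<Rightarrow> real \<Rightarrow> real" where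
  "expected_removed a \<beta> \<delta> x0 t =
     (\<Sum>y\<in>UNIV. sir_trans a \<beta> \<delta> t x0 y * count_comp Rem y)"

definition sir_lambda ::
  "('n::finite \<Rightarrow> 'n \<Rightarrow> real) \<Rightarrow> ('n \<Rightarrow> real) \<Rightarrow> ('n \<Rightarrow> real)
   \<Rightarrow> ('n \<Rightarrow> comp) \<Rightarrow> real" where
  "sir_lambda a \<beta> \<delta> x0 =
     Lim at_top (expected_removed a \<beta> \<delta> x0) - count_comp Inf x0"

end

theory Submission
  imports Defs
begin

definition ptr :: "('s::finite \<Rightarrow> 's \<Rightarrow> real) \<Rightarrow> real \<Rightarrow> 's \<Rightarrow> 's \<Rightarrow> real" where
  "ptr Q t x y = (\<Sum>k. t ^ k / fact k * mat_pow Q k x y)"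

lemma mat_pow_bound:
  fixes Q :: "'s::finite \<Rightarrow> 's \<Rightarrow> real"
  defines "C \<equiv> (\<Sum>z\<in>UNIV. \<Sum>w\<in>UNIV. \<bar>Q z w\<bar>)"
  shows "\<bar>mat_pow Q k x y\<bar> \<le> C ^ k"
proof (induction k arbitrary: y)
  case 0 then show ?case by simp
next
  case (Suc k)
  have C0: "C \<ge> 0" unfolding C_def by (intro sum_nonneg) auto
  have col: "(\<Sum>z\<in>UNIV. \<bar>Q z y\<bar>) \<le> C" unfolding C_def
    by (intro sum_mono member_le_sum) auto
  have "\<bar>mat_pow Q (Suc k) x y\<bar> \<le> (\<Sum>z\<in>UNIV. \<bar>mat_pow Q k x z\<bar> * \<bar>Q z y\<bar>)"
    by (simp add: abs_mult[symmetric] sum_abs)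
  also have "\<dots> \<le> (\<Sum>z\<in>UNIV. C ^ k * \<bar>Q z y\<bar>)"
    by (intro sum_mono mult_right_mono Suc.IH) auto
  also have "\<dots> = C ^ k * (\<Sum>z\<in>UNIV. \<bar>Q z y\<bar>)" by (simp add: sum_distrib_left)
  also have "\<dots> \<le> C ^ k * C" using col C0 by (intro mult_left_mono) auto
  finally show ?case by (simp add: mult.commute)
qed

lemma ptr_summable:
  fixes Q :: "'s::finite \<Rightarrow> 's \<Rightarrow> real"
  shows "summable (\<lambda>k. t ^ k / fact k * mat_pow Q k x y)"
proof -
  define C where "C = (\<Sum>z\<in>UNIV. \<Sum>w\<in>UNIV. \<bar>Q z w\<bar>)"
  have s: "summable (\<lambda>k. inverse (fact k) * (\<bar>t\<bar> * C) ^ k)" by (rule summable_exp)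
  show ?thesis
  proof (rule summable_comparison_test[OF _ s], intro exI allI impI)
    fix k :: nat
    have "norm (t ^ k / fact k * mat_pow Q k x y) = \<bar>t\<bar>^k / fact k * \<bar>mat_pow Q k x y\<bar>"
      by (simp add: abs_mult power_abs)
    also have "\<dots> \<le> \<bar>t\<bar>^k / fact k * C^k"
      by (intro mult_left_mono mat_pow_bound[of Q, folded C_def]) auto
    also have "\<dots> = inverse (fact k) * (\<bar>t\<bar> * C) ^ k" by (simp add: power_mult_distrib field_simps)
    finally show "norm (t ^ k / fact k * mat_pow Q k x y) \<le> inverse (fact k) * (\<bar>t\<bar> * C) ^ k" .
  qed
qed

lemma ptr_deriv:
  fixes Q :: "'s::finite \<Rightarrow> 's \<Rightarrow> real"
  shows "((\<lambda>t. ptr Q t x y) has_real_derivative (\<Sum>z\<in>UNIV. ptr Q t x z * Q z y)) (at t)"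
proof -
  define c where "c k = mat_pow Q k x y / fact k" for k
  have eq: "(\<lambda>t. ptr Q t x y) = (\<lambda>t. \<Sum>k. c k * t ^ k)"
    by (simp add: ptr_def c_def field_simps)
  have sm: "summable (\<lambda>k. c k * s ^ k)" for s
    using ptr_summable[of s Q x y] by (simp add: c_def field_simps)
  have d: "diffs c k * t ^ k = (\<Sum>z\<in>UNIV. t ^ k / fact k * mat_pow Q k x z * Q z y)" for k
  proof -
    have "diffs c k = mat_pow Q (Suc k) x y / fact k"
    proof -
      have "(fact k :: real) > 0" by simp
      moreover have "fact (Suc k) = (real (Suc k)) * (fact k :: real)" by simp
      ultimately show ?thesis unfolding diffs_def c_def
        by (simp del: mat_pow.simps of_nat_Suc fact_Suc)
    qed
    then show ?thesis by (simp add: sum_distrib_left sum_divide_distrib field_simps)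
  qed
  have "(\<Sum>k. diffs c k * t ^ k) = (\<Sum>z\<in>UNIV. \<Sum>k. t ^ k / fact k * mat_pow Q k x z * Q z y)"
    unfolding d
    by (rule suminf_sum) (intro summable_mult2 ptr_summable)
  also have "\<dots> = (\<Sum>z\<in>UNIV. ptr Q t x z * Q z y)"
    unfolding ptr_def by (intro sum.cong refl suminf_mult2[symmetric] ptr_summable)
  finally show ?thesis
    using termdiffs_strong_converges_everywhere[of c t, OF sm] unfolding eq by simp
qed

lemma ptr_0: "ptr Q 0 x y = (if x = y then 1 else 0)"
  unfolding ptr_def
  by (subst suminf_finite[of "{0}"]) auto

lemma sum_upd:
  fixes f :: "'n::finite \<Rightarrow> 'c \<Rightarrow> real"
  shows "(\<Sum>j\<in>UNIV. f j ((z(i:=c)) j)) = (\<Sum>j\<in>UNIV. f j (z j)) - f i (z i) + f i c"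
proof -
  have a: "(\<Sum>j\<in>UNIV. f j ((z(i:=c)) j)) = f i c + (\<Sum>j\<in>UNIV-{i}. f j ((z(i:=c)) j))"
    by (subst sum.remove[of UNIV i]) auto
  have b: "(\<Sum>j\<in>UNIV. f j (z j)) = f i (z i) + (\<Sum>j\<in>UNIV-{i}. f j (z j))"
    by (subst sum.remove[of UNIV i]) auto
  have "(\<Sum>j\<in>UNIV-{i}. f j ((z(i:=c)) j)) = (\<Sum>j\<in>UNIV-{i}. f j (z j))"
    by (intro sum.cong) auto
  then show ?thesis using a b by simp
qed

lemma rate_nonneg:
  assumes "\<forall>i j. a i j \<ge> 0" "\<forall>i. \<beta> i \<ge> 0" "\<forall>i. \<delta> i \<ge> 0"
  shows "sir_rate a \<beta> \<delta> x y \<ge> 0"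
  unfolding sir_rate_def using assms
  by (intro sum_nonneg add_nonneg_nonneg) (auto intro!: mult_nonneg_nonneg sum_nonneg)

lemma rate_nz:
  assumes "sir_rate a \<beta> \<delta> z y \<noteq> 0"
  shows "\<exists>i. (z i = Sus \<and> y = z(i:=Inf)) \<or> (z i = Inf \<and> y = z(i:=Rem))"
proof (rule ccontr)
  assume "\<not> ?thesis"
  then have "sir_rate a \<beta> \<delta> z y = 0" unfolding sir_rate_def by (intro sum.neutral) auto
  then show False using assms by simp
qed

lemma rate_sum:
  "(\<Sum>y\<in>UNIV-{z}. sir_rate a \<beta> \<delta> z y * h y) =
   (\<Sum>i\<in>UNIV. (if z i = Sus then \<beta> i * (\<Sum>j\<in>UNIV. a i j * (if z j = Inf then 1 else 0)) * h (z(i:=Inf)) else 0)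
     + (if z i = Inf then \<delta> i * h (z(i:=Rem)) else 0))"
proof -
  have "(\<Sum>y\<in>UNIV-{z}. sir_rate a \<beta> \<delta> z y * h y) =
    (\<Sum>i\<in>UNIV. \<Sum>y\<in>UNIV-{z}.
        (if y = z(i := Inf) then (if z i = Sus then \<beta> i * (\<Sum>j\<in>UNIV. a i j * (if z j = Inf then 1 else 0)) * h (z(i:=Inf)) else 0) else 0)
      + (if y = z(i := Rem) then (if z i = Inf then \<delta> i * h (z(i:=Rem)) else 0) else 0))"
    unfolding sir_rate_def sum_distrib_right
    by (subst sum.swap) (intro sum.cong refl, auto)
  then show ?thesis
    apply (rule trans)
    apply (intro sum.cong refl)
    apply (simp only: sum.distrib sum.delta finite_Diff finite)
    apply (auto simp: fun_eq_iff split: if_splits)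
    done
qed

lemma gen_apply:
  "(\<Sum>y\<in>UNIV. sir_gen a \<beta> \<delta> z y * g y) =
   (\<Sum>i\<in>UNIV. (if z i = Sus then \<beta> i * (\<Sum>j\<in>UNIV. a i j * (if z j = Inf then 1 else 0)) * (g (z(i:=Inf)) - g z) else 0)
     + (if z i = Inf then \<delta> i * (g (z(i:=Rem)) - g z) else 0))"
proof -
  have "(\<Sum>y\<in>UNIV. sir_gen a \<beta> \<delta> z y * g y) =
      sir_gen a \<beta> \<delta> z z * g z + (\<Sum>y\<in>UNIV-{z}. sir_gen a \<beta> \<delta> z y * g y)"
    by (subst sum.remove[of UNIV z]) auto
  also have "(\<Sum>y\<in>UNIV-{z}. sir_gen a \<beta> \<delta> z y * g y) = (\<Sum>y\<in>UNIV-{z}. sir_rate a \<beta> \<delta> z y * g y)"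
    by (intro sum.cong) (auto simp: sir_gen_def)
  also have "sir_gen a \<beta> \<delta> z z * g z = - (\<Sum>y\<in>UNIV-{z}. sir_rate a \<beta> \<delta> z y * g z)"
    by (simp add: sir_gen_def sum_distrib_right)
  finally have "(\<Sum>y\<in>UNIV. sir_gen a \<beta> \<delta> z y * g y) = (\<Sum>y\<in>UNIV-{z}. sir_rate a \<beta> \<delta> z y * (g y - g z))"
    by (simp add: sum_subtractf right_diff_distrib)
  then show ?thesis by (simp add: rate_sum)
qed

lemma wsum_deriv:
  fixes Q :: "'s::finite \<Rightarrow> 's \<Rightarrow> real"
  shows "((\<lambda>t. \<Sum>y\<in>UNIV. ptr Q t x y * f y) has_real_derivative
          (\<Sum>z\<in>UNIV. ptr Q t x z * (\<Sum>y\<in>UNIV. Q z y * f y))) (at t)"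
proof -
  have "((\<lambda>t. \<Sum>y\<in>UNIV. ptr Q t x y * f y) has_real_derivative
          (\<Sum>y\<in>UNIV. (\<Sum>z\<in>UNIV. ptr Q t x z * Q z y) * f y)) (at t)"
    by (intro DERIV_sum DERIV_cmult_right ptr_deriv) 
  also have "(\<Sum>y\<in>UNIV. (\<Sum>z\<in>UNIV. ptr Q t x z * Q z y) * f y) = (\<Sum>z\<in>UNIV. ptr Q t x z * (\<Sum>y\<in>UNIV. Q z y * f y))"
    by (simp add: sum_distrib_left sum_distrib_right mult.assoc) (rule sum.swap)
  finally show ?thesis .
qed

definition cvn :: "comp \<Rightarrow> nat" where "cvn c = (case c of Sus \<Rightarrow> 0 | Inf \<Rightarrow> 1 | Rem \<Rightarrow> 2)"
definition rk :: "('n::finite \<Rightarrow> comp) \<Rightarrow> nat" where "rk y = (\<Sum>i\<in>UNIV. cvn (y i))"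

lemma rk_real: "real (rk y) = (\<Sum>i\<in>UNIV. real (cvn (y i)))"
  unfolding rk_def by simp

lemma rk_less:
  assumes "sir_rate a \<beta> \<delta> z y \<noteq> 0" shows "rk z < rk y"
proof -
  obtain i where i: "(z i = Sus \<and> y = z(i:=Inf)) \<or> (z i = Inf \<and> y = z(i:=Rem))"
    using rate_nz[OF assms] by blast
  have "real (rk y) = real (rk z) + 1"
    using i
  proof (elim disjE conjE)
    assume "z i = Sus" "y = z(i:=Inf)"
    moreover have "(\<Sum>j\<in>UNIV. real (cvn ((z(i:=Inf)) j))) = (\<Sum>j\<in>UNIV. real (cvn (z j))) - real (cvn (z i)) + real (cvn Inf)"
      by (rule sum_upd)
    ultimately show ?thesis by (simp add: rk_real cvn_def)
  next
    assume "z i = Inf" "y = z(i:=Rem)"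
    moreover have "(\<Sum>j\<in>UNIV. real (cvn ((z(i:=Rem)) j))) = (\<Sum>j\<in>UNIV. real (cvn (z j))) - real (cvn (z i)) + real (cvn Rem)"
      by (rule sum_upd)
    ultimately show ?thesis by (simp add: rk_real cvn_def)
  qed
  then show ?thesis by simp
qed

lemma ptr_nonneg:
  assumes nn: "\<forall>i j. a i j \<ge> 0" "\<forall>i. \<beta> i \<ge> 0" "\<forall>i. \<delta> i \<ge> 0" and t: "t \<ge> 0"
  shows "ptr (sir_gen a \<beta> \<delta>) t x y \<ge> 0"
  using t
proof (induction y arbitrary: t rule: measure_induct_rule[where f=rk])
  case (less y)
  define Q where "Q = sir_gen a \<beta> \<delta>"
  define q where "q = (\<Sum>z\<in>UNIV-{y}. sir_rate a \<beta> \<delta> y z)"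
  define g where "g s = exp (q * s) * ptr Q s x y" for s
  have Qyy: "Q y y = - q" by (simp add: Q_def q_def sir_gen_def)
  have "g 0 \<le> g t"
  proof (rule DERIV_nonneg_imp_nondecreasing[OF less.prems])
    fix s :: real assume s: "0 \<le> s" "s \<le> t"
    have d: "(g has_real_derivative
        (exp (q * s) * q * ptr Q s x y + exp (q * s) * (\<Sum>z\<in>UNIV. ptr Q s x z * Q z y))) (at s)"
      unfolding g_def
      by (rule DERIV_mult[OF _ ptr_deriv, THEN DERIV_cong]) (auto intro!: derivative_eq_intros)
    have "(\<Sum>z\<in>UNIV. ptr Q s x z * Q z y) = ptr Q s x y * Q y y + (\<Sum>z\<in>UNIV-{y}. ptr Q s x z * Q z y)"
      by (subst sum.remove[of UNIV y]) auto
    also have "(\<Sum>z\<in>UNIV-{y}. ptr Q s x z * Q z y) = (\<Sum>z\<in>UNIV-{y}. ptr Q s x z * sir_rate a \<beta> \<delta> z y)"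
      by (intro sum.cong) (auto simp: Q_def sir_gen_def)
    finally have h: "(\<Sum>z\<in>UNIV. ptr Q s x z * Q z y) = (\<Sum>z\<in>UNIV-{y}. ptr Q s x z * sir_rate a \<beta> \<delta> z y) - q * ptr Q s x y"
      by (simp add: Qyy)
    have e: "exp (q * s) * q * ptr Q s x y + exp (q * s) * (\<Sum>z\<in>UNIV. ptr Q s x z * Q z y)
       = exp (q * s) * (\<Sum>z\<in>UNIV-{y}. ptr Q s x z * sir_rate a \<beta> \<delta> z y)"
      unfolding h by (simp add: algebra_simps)
    have "(\<Sum>z\<in>UNIV-{y}. ptr Q s x z * sir_rate a \<beta> \<delta> z y) \<ge> 0"
    proof (intro sum_nonneg)
      fix z assume "z \<in> UNIV - {y}"
      show "ptr Q s x z * sir_rate a \<beta> \<delta> z y \<ge> 0"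
      proof (cases "sir_rate a \<beta> \<delta> z y = 0")
        case False
        then have "rk z < rk y" by (rule rk_less)
        then have "ptr Q s x z \<ge> 0" unfolding Q_def using less.IH s by blast
        then show ?thesis using rate_nonneg[OF nn] by simp
      qed simp
    qed
    then show "\<exists>D. (g has_real_derivative D) (at s) \<and> 0 \<le> D"
      using d e by (intro exI[of _ "exp (q * s) * (\<Sum>z\<in>UNIV-{y}. ptr Q s x z * sir_rate a \<beta> \<delta> z y)"]) auto
  qed
  moreover have "g 0 \<ge> 0" by (simp add: g_def ptr_0)
  ultimately have "g t \<ge> 0" by simp
  then show ?case unfolding g_def Q_def by (simp add: zero_le_mult_iff)
qed

definition om :: "('n \<Rightarrow> comp) \<Rightarrow> ('n \<Rightarrow> comp) \<Rightarrow> bool" where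
  "om x0 y = (\<forall>i. y i = Sus \<longrightarrow> x0 i = Sus)"

lemma mat_pow_support:
  assumes "\<not> om x0 y"
  shows "mat_pow (sir_gen a \<beta> \<delta>) k x0 y = 0"
  using assms
proof (induction k arbitrary: y)
  case 0 then show ?case by (auto simp: om_def)
next
  case (Suc k)
  show ?case unfolding mat_pow.simps
  proof (intro sum.neutral ballI)
    fix z
    show "mat_pow (sir_gen a \<beta> \<delta>) k x0 z * sir_gen a \<beta> \<delta> z y = 0"
    proof (cases "om x0 z")
      case False then show ?thesis using Suc.IH by simp
    next
      case True
      then have "z \<noteq> y" using Suc.prems by auto
      moreover have "sir_rate a \<beta> \<delta> z y = 0"
      proof (rule ccontr)
        assume "sir_rate a \<beta> \<delta> z y \<noteq> 0"
        then obtain i where "(z i = Sus \<and> y = z(i:=Inf)) \<or> (z i = Inf \<and> y = z(i:=Rem))"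
          using rate_nz by blast
        then have "om x0 y" using True by (auto simp: om_def split: if_splits)
        then show False using Suc.prems by simp
      qed
      ultimately show ?thesis by (simp add: sir_gen_def)
    qed
  qed
qed

lemma ptr_support:
  assumes "\<not> om x0 y"
  shows "ptr (sir_gen a \<beta> \<delta>) t x0 y = 0"
  unfolding ptr_def mat_pow_support[OF assms] by simp

lemma count_comp_sum: "count_comp c y = (\<Sum>i\<in>UNIV. if y i = c then 1 else 0)"
  unfolding count_comp_def by (simp add: sum.If_cases)

theorem proposition1:
  fixes a :: "'n::finite \<Rightarrow> 'n \<Rightarrow> real"
    and \<beta> \<delta> v :: "'n \<Rightarrow> real"
    and x0 :: "'n \<Rightarrow> comp"
    and lambda_bar :: real
  assumes adj01: "\<forall>i j. a i j = 0 \<or> a i j = 1"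
    and adj_sym: "\<forall>i j. a i j = a j i"
    and beta_pos: "\<forall>i. \<beta> i > 0"
    and delta_pos: "\<forall>i. \<delta> i > 0"
    and init: "\<forall>i. x0 i = Sus \<or> x0 i = Inf"
    and lbar_pos: "lambda_bar > 0"
    and v_pos: "\<forall>i. v i > 0"
    and cond1: "\<forall>k. (\<Sum>j\<in>UNIV. v j * (if x0 j = Sus then 1 else 0) * \<beta> j * a j k) + \<delta> k
                    < v k * \<delta> k"
    and cond2: "(\<Sum>j\<in>UNIV. v j * (if x0 j = Inf then 1 else 0))
                  < lambda_bar + count_comp Inf x0"
  shows "sir_lambda a \<beta> \<delta> x0 < lambda_bar"
proof -
  have ann: "\<forall>i j. a i j \<ge> 0" using adj01 by (metis order.refl zero_le_one)
  have bnn: "\<forall>i. \<beta> i \<ge> 0" and dnn: "\<forall>i. \<delta> i \<ge> 0" using beta_pos delta_pos by (auto intro: less_imp_le)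
  define Q where "Q = sir_gen a \<beta> \<delta>"
  define p where "p t y = ptr Q t x0 y" for t y
  have pnn: "p t y \<ge> 0" if "t \<ge> 0" for t y
    unfolding p_def Q_def using ptr_nonneg[OF ann bnn dnn that] .
  have psupp: "p t y = 0" if "\<not> om x0 y" for t y
    unfolding p_def Q_def using ptr_support[OF that] .
  define f where "f j c = (if c = Inf then v j else 0) + (if c = Rem then 1 else (0::real))" for j c
  define V where "V y = (\<Sum>j\<in>UNIV. f j (y j))" for y :: "'n \<Rightarrow> comp"
  define fr where "fr (j::'n) c = (if c = Rem then 1 else (0::real))" for j c
  define R where "R y = (\<Sum>j\<in>UNIV. fr j (y j))" for y :: "'n \<Rightarrow> comp"
  define S where "S z i = (\<Sum>j\<in>UNIV. a i j * (if z j = Inf then 1 else (0::real)))" for z :: "'n \<Rightarrow> comp" and i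
  have Snn: "S z i \<ge> 0" for z i unfolding S_def using ann by (intro sum_nonneg) auto
  have QV: "(\<Sum>y\<in>UNIV. Q z y * V y) = (\<Sum>i\<in>UNIV. (if z i = Sus then \<beta> i * S z i * v i else 0)
       + (if z i = Inf then \<delta> i * (1 - v i) else 0))" for z
    unfolding Q_def gen_apply S_def[symmetric]
  proof (intro sum.cong refl)
    fix i
    have u: "V (z(i:=c)) - V z = f i c - f i (z i)" for c
      unfolding V_def using sum_upd[of f z i c] by simp
    show "(if z i = Sus then \<beta> i * S z i * (V (z(i := Inf)) - V z) else 0) +
          (if z i = Inf then \<delta> i * (V (z(i := Rem)) - V z) else 0) =
          (if z i = Sus then \<beta> i * S z i * v i else 0) + (if z i = Inf then \<delta> i * (1 - v i) else 0)"
      unfolding u by (simp add: f_def)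
  qed
  have QVle: "(\<Sum>y\<in>UNIV. Q z y * V y) \<le> 0" if oz: "om x0 z" for z
  proof -
    define Jv where "Jv i = (if x0 i = Sus then 1 else (0::real))" for i
    have "(\<Sum>i\<in>UNIV. (if z i = Sus then \<beta> i * S z i * v i else 0)) \<le> (\<Sum>i\<in>UNIV. Jv i * \<beta> i * v i * S z i)"
    proof (intro sum_mono)
      fix i
      show "(if z i = Sus then \<beta> i * S z i * v i else 0) \<le> Jv i * \<beta> i * v i * S z i"
        using oz bnn v_pos Snn[of z i] by (auto simp: om_def Jv_def less_imp_le)
    qed
    also have "\<dots> = (\<Sum>j\<in>UNIV. (if z j = Inf then 1 else 0) * (\<Sum>i\<in>UNIV. v i * Jv i * \<beta> i * a i j))"
      unfolding S_def sum_distrib_left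
      by (subst sum.swap) (intro sum.cong refl, simp add: algebra_simps)
    finally have A: "(\<Sum>i\<in>UNIV. (if z i = Sus then \<beta> i * S z i * v i else 0))
        \<le> (\<Sum>j\<in>UNIV. (if z j = Inf then 1 else 0) * (\<Sum>i\<in>UNIV. v i * Jv i * \<beta> i * a i j))" .
    have "(\<Sum>y\<in>UNIV. Q z y * V y) \<le> (\<Sum>j\<in>UNIV. (if z j = Inf then 1 else 0) * (\<Sum>i\<in>UNIV. v i * Jv i * \<beta> i * a i j))
       + (\<Sum>j\<in>UNIV. (if z j = Inf then \<delta> j * (1 - v j) else 0))"
      unfolding QV sum.distrib using A by simp
    also have "\<dots> = (\<Sum>j\<in>UNIV. (if z j = Inf then 1 else 0) * ((\<Sum>i\<in>UNIV. v i * Jv i * \<beta> i * a i j) + \<delta> j - v j * \<delta> j))"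
      unfolding sum.distrib[symmetric] by (intro sum.cong refl) (auto simp: algebra_simps)
    also have "\<dots> \<le> 0"
    proof (intro sum_nonpos)
      fix j
      have "(\<Sum>i\<in>UNIV. v i * Jv i * \<beta> i * a i j) + \<delta> j < v j * \<delta> j"
        using cond1 unfolding Jv_def by blast
      then show "(if z j = Inf then 1 else 0) * ((\<Sum>i\<in>UNIV. v i * Jv i * \<beta> i * a i j) + \<delta> j - v j * \<delta> j) \<le> 0"
        by simp
    qed
    finally show ?thesis .
  qed
  have QRge: "(\<Sum>y\<in>UNIV. Q z y * R y) \<ge> 0" for z
    unfolding Q_def gen_apply
  proof (intro sum_nonneg add_nonneg_nonneg)
    fix i
    have u: "R (z(i:=c)) - R z = fr i c - fr i (z i)" for c
      unfolding R_def using sum_upd[of fr z i c] by simp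
    show "0 \<le> (if z i = Sus then \<beta> i * (\<Sum>j\<in>UNIV. a i j * (if z j = Inf then 1 else 0)) * (R (z(i := Inf)) - R z) else 0)"
      unfolding u by (simp add: fr_def)
    show "0 \<le> (if z i = Inf then \<delta> i * (R (z(i := Rem)) - R z) else 0)"
      unfolding u using dnn by (simp add: fr_def)
  qed
  define FV where "FV t = (\<Sum>y\<in>UNIV. p t y * V y)" for t
  define FR where "FR t = (\<Sum>y\<in>UNIV. p t y * R y)" for t
  have dFV: "(FV has_real_derivative (\<Sum>z\<in>UNIV. p t z * (\<Sum>y\<in>UNIV. Q z y * V y))) (at t)" for t
    unfolding FV_def p_def by (rule wsum_deriv)
  have dFR: "(FR has_real_derivative (\<Sum>z\<in>UNIV. p t z * (\<Sum>y\<in>UNIV. Q z y * R y))) (at t)" for t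
    unfolding FR_def p_def by (rule wsum_deriv)
  have FV0: "FV 0 = V x0"
    unfolding FV_def p_def ptr_0 by (simp add: if_distrib[of "\<lambda>c. c * _"] sum.delta' cong: if_cong)
  have V0: "V x0 = (\<Sum>j\<in>UNIV. v j * (if x0 j = Inf then 1 else 0))"
    proof -
    have nr: "x0 j \<noteq> Rem" for j using init[rule_format, of j] by auto
    show ?thesis unfolding V_def f_def by (intro sum.cong refl) (simp add: nr)
  qed
  have FVle: "FV t \<le> V x0" if "t \<ge> 0" for t
  proof -
    have "FV t \<le> FV 0"
    proof (rule DERIV_nonpos_imp_nonincreasing[OF that])
      fix s :: real assume s: "0 \<le> s" "s \<le> t"
      have "(\<Sum>z\<in>UNIV. p s z * (\<Sum>y\<in>UNIV. Q z y * V y)) \<le> 0"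
      proof (intro sum_nonpos)
        fix z
        show "p s z * (\<Sum>y\<in>UNIV. Q z y * V y) \<le> 0"
        proof (cases "om x0 z")
          case True then show ?thesis using pnn[OF s(1)] QVle[OF True] by (simp add: mult_nonneg_nonpos)
        qed (simp add: psupp)
      qed
      then show "\<exists>D. (FV has_real_derivative D) (at s) \<and> D \<le> 0" using dFV by blast
    qed
    then show ?thesis using FV0 by simp
  qed
  have FRmono: "FR s \<le> FR t" if "0 \<le> s" "s \<le> t" for s t
  proof (rule DERIV_nonneg_imp_nondecreasing[OF that(2)])
    fix r :: real assume r: "s \<le> r" "r \<le> t"
    have "(\<Sum>z\<in>UNIV. p r z * (\<Sum>y\<in>UNIV. Q z y * R y)) \<ge> 0"
    proof (intro sum_nonneg)
      fix z
      have "0 \<le> r" using r that by simp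
      then show "0 \<le> p r z * (\<Sum>y\<in>UNIV. Q z y * R y)"
        using pnn QRge by (simp add: mult_nonneg_nonneg)
    qed
    then show "\<exists>D. (FR has_real_derivative D) (at r) \<and> D \<ge> 0" using dFR by blast
  qed
  have RV: "R y \<le> V y" for y
    unfolding R_def V_def f_def fr_def using v_pos by (intro sum_mono) (auto simp: less_imp_le)
  have FRle: "FR t \<le> V x0" if "t \<ge> 0" for t
  proof -
    have "FR t \<le> FV t" unfolding FR_def FV_def
      using pnn[OF that] RV by (intro sum_mono mult_left_mono) auto
    then show ?thesis using FVle[OF that] by simp
  qed
  define l where "l = Sup (FR ` {0..})"
  have bdd: "bdd_above (FR ` {0..})" using FRle by (intro bdd_aboveI[of _ "V x0"]) auto
  have lim: "(FR \<longlongrightarrow> l) at_top"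
  proof (rule increasing_tendsto)
    show "\<forall>\<^sub>F n in at_top. FR n \<le> l"
      using eventually_ge_at_top[of "0::real"]
      by eventually_elim (auto simp: l_def intro!: cSup_upper bdd)
  next
    fix x assume "x < l"
    then obtain s where s: "s \<in> {0..}" "x < FR s"
      unfolding l_def using less_cSup_iff[OF _ bdd] by auto
    show "\<forall>\<^sub>F n in at_top. x < FR n"
      using eventually_ge_at_top[of s]
      by eventually_elim (use s FRmono in force)
  qed
  have lle: "l \<le> V x0" unfolding l_def using FRle by (intro cSup_least) auto
  have ER: "expected_removed a \<beta> \<delta> x0 = FR"
    unfolding expected_removed_def FR_def p_def Q_def R_def fr_def sir_trans_def ptr_def
    by (auto simp: fun_eq_iff count_comp_sum)
  have "sir_lambda a \<beta> \<delta> x0 = l - count_comp Inf x0"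
    unfolding sir_lambda_def ER using tendsto_Lim[OF trivial_limit_at_top_linorder lim] by simp
  then show ?thesis using lle V0 cond2 by simp
qed

end
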